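(* Let $n\ge 1$ and let $g(q)=q^{n}+q^{n-1}a_{n-1}+\dots+qa_1+a_0$ with $a_0,\dots,a_{n-1}\in\mathbb{H}$. Let $\alpha_1,\alpha_2,\dots,\alpha_{n-1}$ be arbitrary positive real numbers and set $\alpha_0=0$, $\alpha_n=1$. Then every zero $q\in\mathbb{H}$ of $g$ satisfies $$|q|\le \max\Big\{\frac{\alpha_i}{\alpha_{i+1}}+\frac{|a_i|}{\alpha_{i+1}}\ :\ i=0,1,\dots,n-1\Big\}.$$
   Context: $\mathbb{H}$ denotes the real quaternions $a_0+a_1i+a_2j+a_3k$ with $i^2=j^2=k^2=ijk=-1$; for $q=\alpha+\beta i+\gamma j+\delta k$, $|q|=\sqrt{\alpha^2+\beta^2+\gamma^2+\delta^2}$. The polynomial $g$ has its coefficients written to the right of the powers of the variable, and it is evaluated at $q\in\mathbb{H}$ by direct substitution, $g(q)=q^n+q^{n-1}a_{n-1}+\dots+qa_1+a_0$; a zero of $g$ is a $q\in\mathbb{H}$ with $g(q)=0$. *)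

theory Defs
  imports Complex_Main
begin

text \<open>Real quaternions a0 + a1 i + a2 j + a3 k, with i^2 = j^2 = k^2 = ijk = -1.\<close>

datatype quat = Quat (Re: real) (Im1: real) (Im2: real) (Im3: real)

definition qzero :: quat where "qzero = Quat 0 0 0 0"
definition qone :: quat where "qone = Quat 1 0 0 0"

definition qadd :: "quat \<Rightarrow> quat \<Rightarrow> quat" where
  "qadd p q = Quat (Re p + Re q) (Im1 p + Im1 q) (Im2 p + Im2 q) (Im3 p + Im3 q)"

definition qmul :: "quat \<Rightarrow> quat \<Rightarrow> quat" where
  "qmul p q = Quat
     (Re p * Re q - Im1 p * Im1 q - Im2 p * Im2 q - Im3 p * Im3 q)
     (Re p * Im1 q + Im1 p * Re q + Im2 p * Im3 q - Im3 p * Im2 q)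
     (Re p * Im2 q - Im1 p * Im3 q + Im2 p * Re q + Im3 p * Im1 q)
     (Re p * Im3 q + Im1 p * Im2 q - Im2 p * Im1 q + Im3 p * Re q)"

fun qpow :: "quat \<Rightarrow> nat \<Rightarrow> quat" where
  "qpow q 0 = qone"
| "qpow q (Suc m) = qmul (qpow q m) q"

definition qnorm :: "quat \<Rightarrow> real" where
  "qnorm q = sqrt ((Re q)^2 + (Im1 q)^2 + (Im2 q)^2 + (Im3 q)^2)"

fun qsum :: "(nat \<Rightarrow> quat) \<Rightarrow> nat \<Rightarrow> quat" where
  "qsum f 0 = qzero"
| "qsum f (Suc m) = qadd (qsum f m) (f m)"

definition qpoly_eval :: "nat \<Rightarrow> (nat \<Rightarrow> quat) \<Rightarrow> quat \<Rightarrow> quat" where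
  "qpoly_eval n a q = qadd (qpow q n) (qsum (\<lambda>i. qmul (qpow q i) (a i)) n)"

end

theory Submission
  imports Defs "HOL-Analysis.Product_Vector"
begin

definition qv :: "quat \<Rightarrow> (real*real)*(real*real)" where
  "qv p = ((Re p, Im1 p), (Im2 p, Im3 p))"

lemma qnorm_qv: "qnorm p = norm (qv p)"
  by (simp add: qnorm_def qv_def norm_prod_def)

lemma qnorm_nonneg: "qnorm p \<ge> 0" by (simp add: qnorm_def)

lemma qnorm_add: "qnorm (qadd p r) \<le> qnorm p + qnorm r"
proof -
  have "qv (qadd p r) = qv p + qv r" by (simp add: qv_def qadd_def)
  thus ?thesis by (simp add: qnorm_qv norm_triangle_ineq)
qed

lemma qnorm_mul: "qnorm (qmul p r) = qnorm p * qnorm r"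
proof -
  have "(Re (qmul p r))^2 + (Im1 (qmul p r))^2 + (Im2 (qmul p r))^2 + (Im3 (qmul p r))^2
     = ((Re p)^2 + (Im1 p)^2 + (Im2 p)^2 + (Im3 p)^2) * ((Re r)^2 + (Im1 r)^2 + (Im2 r)^2 + (Im3 r)^2)"
    by (simp add: qmul_def power2_eq_square algebra_simps)
  thus ?thesis by (simp add: qnorm_def real_sqrt_mult)
qed

lemma qnorm_pow: "qnorm (qpow q i) = qnorm q ^ i"
proof (induct i)
  case 0 thus ?case by (simp add: qone_def qnorm_def)
next
  case (Suc i) thus ?case by (simp only: qpow.simps qnorm_mul) simp
qed

lemma qnorm_sum: "qnorm (qsum f m) \<le> (\<Sum>i<m. qnorm (f i))"
proof (induct m)
  case 0 thus ?case by (simp add: qzero_def qnorm_def)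
next
  case (Suc m) thus ?case using qnorm_add[of "qsum f m" "f m"] by simp
qed

lemma real_part:
  fixes r :: real and b \<alpha> :: "nat \<Rightarrow> real"
  assumes n: "n \<ge> 1" and pos: "\<forall>i<n. \<alpha> (Suc i) > 0"
    and a0: "\<alpha> 0 = 0" and an: "\<alpha> n = 1" and b: "\<forall>i. b i \<ge> 0" and anonneg: "\<forall>i\<le>n. \<alpha> i \<ge> 0"
    and ineq: "r ^ n \<le> (\<Sum>i<n. r ^ i * b i)" and r0: "r \<ge> 0"
  shows "r \<le> Max ((\<lambda>i. \<alpha> i / \<alpha> (Suc i) + b i / \<alpha> (Suc i)) ` {0..<n})"
proof (rule ccontr)
  let ?M = "Max ((\<lambda>i. \<alpha> i / \<alpha> (Suc i) + b i / \<alpha> (Suc i)) ` {0..<n})"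
  assume "\<not> r \<le> ?M"
  hence rM: "r > ?M" by simp
  have fin: "finite ((\<lambda>i. \<alpha> i / \<alpha> (Suc i) + b i / \<alpha> (Suc i)) ` {0..<n})" by simp
  have lt: "b i < r * \<alpha> (Suc i) - \<alpha> i" if "i < n" for i
  proof -
    have "\<alpha> i / \<alpha> (Suc i) + b i / \<alpha> (Suc i) \<le> ?M"
      using that by (intro Max_ge[OF fin]) auto
    hence "(\<alpha> i + b i) / \<alpha> (Suc i) < r" using rM by (simp add: add_divide_distrib)
    thus ?thesis using pos that by (simp add: divide_less_eq algebra_simps)
  qed
  have "0 \<le> \<alpha> 0 / \<alpha> (Suc 0) + b 0 / \<alpha> (Suc 0)" using a0 b pos n by (simp add: less_imp_le)
  also have "\<dots> \<le> ?M" using n by (intro Max_ge[OF fin]) auto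
  finally have rpos: "r > 0" using rM by simp
  have "(\<Sum>i<n. r ^ i * b i) < (\<Sum>i<n. r ^ i * (r * \<alpha> (Suc i) - \<alpha> i))"
    using n by (intro sum_strict_mono) (auto intro!: mult_strict_left_mono lt rpos zero_less_power simp: lessThan_empty_iff)
  also have "\<dots> = (\<Sum>i<n. r ^ Suc i * \<alpha> (Suc i) - r ^ i * \<alpha> i)"
    by (simp add: algebra_simps)
  also have "\<dots> = r ^ n * \<alpha> n - r ^ 0 * \<alpha> 0"
    by (rule sum_lessThan_telescope)
  also have "\<dots> = r ^ n" using a0 an by simp
  finally show False using ineq by simp
qed

theorem theorem1:
  fixes n :: nat and a :: "nat \<Rightarrow> quat" and \<alpha> :: "nat \<Rightarrow> real" and q :: quat
  assumes "n \<ge> 1"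
    and "\<forall>i. 1 \<le> i \<and> i \<le> n - 1 \<longrightarrow> \<alpha> i > 0"
    and "\<alpha> 0 = 0" and "\<alpha> n = 1"
    and "qpoly_eval n a q = qzero"
  shows "qnorm q \<le> Max ((\<lambda>i. \<alpha> i / \<alpha> (Suc i) + qnorm (a i) / \<alpha> (Suc i)) ` {0..<n})"
proof (rule real_part[where b="\<lambda>i. qnorm (a i)"])
  show "\<forall>i<n. \<alpha> (Suc i) > 0"
  proof (intro allI impI)
    fix i assume "i < n"
    thus "\<alpha> (Suc i) > 0" using assms(2,4) by (cases "Suc i = n") auto
  qed
  show "\<forall>i\<le>n. \<alpha> i \<ge> 0"
  proof (intro allI impI)
    fix i assume "i \<le> n"
    thus "\<alpha> i \<ge> 0" using assms(2,3,4)
      by (cases "i = 0"; cases "i = n") (auto simp: less_imp_le)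
  qed
  let ?S = "qsum (\<lambda>i. qmul (qpow q i) (a i)) n"
  have z: "qadd (qpow q n) ?S = qzero" using assms(5) by (simp add: qpoly_eval_def)
  have "qnorm (qpow q n) = qnorm ?S"
    using z unfolding qnorm_def qadd_def qzero_def
    by (simp add: eq_neg_iff_add_eq_0[symmetric] power2_eq_square)
  also have "\<dots> \<le> (\<Sum>i<n. qnorm (qmul (qpow q i) (a i)))" by (rule qnorm_sum)
  finally show "qnorm q ^ n \<le> (\<Sum>i<n. qnorm q ^ i * qnorm (a i))"
    by (simp add: qnorm_pow qnorm_mul)
qed (use assms qnorm_nonneg in auto)

end
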